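(* Let $\varphi(s,v)=\vec c(s)+v\vec q(s)$ be a developable timelike ruled surface of type $M^1_+$ in $\mathbb{R}^3_1$ and let the spacelike ruled surface $\varphi^*(s,v)=\vec c(s)+R\vec a(s)+v\vec q^*(s)$ of type $M^2_+$ be a Mannheim offset of $\varphi$, with $\theta$ the angle between $\vec q$ and $\vec q^*$. Let $\varphi_{h^*}$ and $\varphi_{a^*}$ be the trajectory ruled surfaces generated by $\vec h^*$ and $\vec a^*$. Then (a) $\varphi_{h^*}$ is nondevelopable; (b) $\varphi_{a^*}$ is developable if and only if $\cos\theta+R\frac{ds_1}{ds}\kappa\sin\theta=0$.
   Context: Work in Minkowski 3-space $\mathbb{R}^3_1$ with $\langle x,y\rangle=-x_1y_1+x_2y_2+x_3y_3$, $\|x\|=\sqrt{|\langle x,x\rangle|}$, and Lorentzian cross product $x\times y=(x_2y_3-x_3y_2,\,x_1y_3-x_3y_1,\,x_2y_1-x_1y_2)$. A ruled surface is $\varphi(s,v)=\vec c(s)+v\vec q(s)$ with $\vec q$ a unit non-null vector field, $d\vec q/ds$ non-null, $\vec c$ the striction curve ($\langle d\vec q/ds,d\vec c/ds\rangle=0$) and $s$ the arc length of $\vec c$. Its Frenet frame $\{\vec q,\vec h,\vec a\}$ has central normal $\vec h=\frac{d\vec q/ds}{\|d\vec q/ds\|}$ and asymptotic normal $\vec a=\frac{(d\vec q/ds)\times\vec q}{\|d\vec q/ds\|}$. Type $M^1_+$: $\vec q$ and $\vec h$ spacelike (a timelike surface); type $M^2_+$: $\vec h$ timelike, $\vec q$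 and $d\vec q/ds$ spacelike (a spacelike surface). Let $s_1$ be the arc length of the spherical image of $\vec q$ and $\kappa$ the conical curvature of the directing cone; for type $M^1_+$: $d\vec q/ds_1=\vec h$, $d\vec h/ds_1=-\vec q+\kappa\vec a$, $d\vec a/ds_1=\kappa\vec h$. A ruled surface $\psi(s,v)=\vec b(s)+v\vec e(s)$ has distribution parameter $\det(d\vec b/ds,\vec e,d\vec e/ds)/\langle d\vec e/ds,d\vec e/ds\rangle$ and is developable iff it vanishes identically. A ruled surface $\varphi^*(s,v)=\vec c^*(s)+v\vec q^*(s)$ with Frenet frame $\{\vec q^*,\vec h^*,\vec a^*\}$ is a Mannheim offset of $\varphi$ if its rulings correspond one-to-one with those of $\varphi$ and $\vec h^*=\vec a$; then $\vec c^*=\vec c+R\vec a$ with $R$ constant since $\varphi$ is developable, and with $\theta$ the angle between $\vec q$ and $\vec q^*$, $\vec q^*=\cos\theta\,\vec q+\sin\theta\,\vec h$, $\vec a^*=\sin\theta\,\vec q-\cos\theta\,\vec h$. The trajectory ruled surfaces are $\varphi_{h^*}(s,v)=\vec c^*(s)+v\vec h^*(s)$ and $\varphi_{a^*}(s,v)=\vec c^*(s)+v\vec a^*(s)$. *)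

theory Defs
  imports "HOL-Analysis.Analysis"
begin

definition lor_inner :: "real^3 \<Rightarrow> real^3 \<Rightarrow> real" where
  "lor_inner x y = - x$1 * y$1 + x$2 * y$2 + x$3 * y$3"

definition lnorm :: "real^3 \<Rightarrow> real" where
  "lnorm x = sqrt \<bar>lor_inner x x\<bar>"

definition lcross :: "real^3 \<Rightarrow> real^3 \<Rightarrow> real^3" where
  "lcross x y = vector [x$2 * y$3 - x$3 * y$2, x$1 * y$3 - x$3 * y$1, x$2 * y$1 - x$1 * y$2]"

definition spacelike :: "real^3 \<Rightarrow> bool" where
  "spacelike x \<longleftrightarrow> lor_inner x x > 0"

definition timelike :: "real^3 \<Rightarrow> bool" where
  "timelike x \<longleftrightarrow> lor_inner x x < 0"

definition det3 :: "real^3 \<Rightarrow> real^3 \<Rightarrow> real^3 \<Rightarrow> real" where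
  "det3 x y z = det (vector [x, y, z] :: real^3^3)"

definition central_normal :: "(real \<Rightarrow> real^3) \<Rightarrow> real \<Rightarrow> real^3" where
  "central_normal q s = (1 / lnorm (vector_derivative q (at s))) *\<^sub>R vector_derivative q (at s)"

definition asymptotic_normal :: "(real \<Rightarrow> real^3) \<Rightarrow> real \<Rightarrow> real^3" where
  "asymptotic_normal q s =
     (1 / lnorm (vector_derivative q (at s))) *\<^sub>R lcross (vector_derivative q (at s)) (q s)"

text \<open>Distribution parameter of the ruled surface b(s) + v e(s).\<close>
definition distribution_parameter :: "(real \<Rightarrow> real^3) \<Rightarrow> (real \<Rightarrow> real^3) \<Rightarrow> real \<Rightarrow> real" where
  "distribution_parameter b e s =
     det3 (vector_derivative b (at s)) (e s) (vector_derivative e (at s))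
     / lor_inner (vector_derivative e (at s)) (vector_derivative e (at s))"

definition developable :: "(real \<Rightarrow> real^3) \<Rightarrow> (real \<Rightarrow> real^3) \<Rightarrow> real set \<Rightarrow> bool" where
  "developable b e I \<longleftrightarrow> (\<forall>s\<in>I. distribution_parameter b e s = 0)"

end

theory Submission imports Defs begin
lemma lcross_comp: "lcross x y $ 1 = x$2 * y$3 - x$3 * y$2" "lcross x y $ 2 = x$1 * y$3 - x$3 * y$1"
  "lcross x y $ 3 = x$2 * y$1 - x$1 * y$2"
  by (simp_all add: lcross_def vector_def)
lemma det3_expand: "det3 x y z = x$1*y$2*z$3 - x$1*y$3*z$2 - x$2*y$1*z$3 + x$2*y$3*z$1 + x$3*y$1*z$2 - x$3*y$2*z$1"
  unfolding det3_def det_3 by (simp add: vector_def algebra_simps)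
lemma vec3_eq: "(x::real^3) = y \<longleftrightarrow> x$1 = y$1 \<and> x$2 = y$2 \<and> x$3 = y$3"
  by (simp add: vec_eq_iff forall_3)
lemma cross_norm: "lor_inner (lcross x y) (lcross x y) = (lor_inner x y)^2 - lor_inner x x * lor_inner y y"
  by (simp add: lcross_comp lor_inner_def power2_eq_square algebra_simps)
lemma decomp: assumes "lor_inner q q = 1" "lor_inner h h = 1" "lor_inner q h = 0"
  "det3 C q h = 0" "lor_inner h C = 0" shows "C = lor_inner C q *\<^sub>R q"
  using assms unfolding vec3_eq det3_expand lor_inner_def by simp algebra
lemma P1: assumes "lor_inner q q = 1" "lor_inner h h = 1" "lor_inner q h = 0"
  shows "det3 (q + r *\<^sub>R h) (lcross h q) (m *\<^sub>R h) = m"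
  using assms by (simp add: det3_expand lor_inner_def lcross_comp) algebra
lemma P2: assumes "lor_inner q q = 1" "lor_inner h h = 1" "lor_inner q h = 0"
  shows "det3 (q + r *\<^sub>R h) (lcross (lcross h q) (c *\<^sub>R q + s *\<^sub>R h)) (m *\<^sub>R lcross h q) = - m * (c + r * s)"
  using assms by (simp add: det3_expand lor_inner_def lcross_comp) algebra
lemma lor_scale: "lor_inner (a *\<^sub>R x) y = a * lor_inner x y" "lor_inner x (b *\<^sub>R y) = b * lor_inner x y"
  by (simp_all add: lor_inner_def algebra_simps)
lemma lor_sym: "lor_inner x y = lor_inner y x" by (simp add: lor_inner_def algebra_simps)
lemma lcross_scale: "lcross (a *\<^sub>R x) y = a *\<^sub>R lcross x y" "lcross x (b *\<^sub>R y) = b *\<^sub>R lcross x y"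
  by (simp_all add: vec3_eq lcross_comp algebra_simps)
lemma lcross_self: "lcross x x = 0" by (simp add: vec3_eq lcross_comp algebra_simps)
lemma lcross_hqs: "lcross h (c *\<^sub>R q + s *\<^sub>R h) = c *\<^sub>R lcross h q"
  by (simp add: vec3_eq lcross_comp algebra_simps)
lemma det3_scale3: "det3 x y (c *\<^sub>R z) = c * det3 x y z" by (simp add: det3_expand algebra_simps)

lemma bb_lcross: "bounded_bilinear lcross"
  unfolding bilinear_conv_bounded_bilinear[symmetric] bilinear_def
  by (auto intro!: linearI simp: vec3_eq lcross_comp algebra_simps)
lemma bb_lor: "bounded_bilinear lor_inner"
  unfolding bilinear_conv_bounded_bilinear[symmetric] bilinear_def
  by (auto intro!: linearI simp: lor_inner_def algebra_simps)

lemma lcross_deriv: "(f has_vector_derivative f') (at s) \<Longrightarrow> (g has_vector_derivative g') (at s) \<Longrightarrow>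
  ((\<lambda>t. lcross (f t) (g t)) has_vector_derivative (lcross (f s) g' + lcross f' (g s))) (at s)"
  by (rule bounded_bilinear.has_vector_derivative[OF bb_lcross])
lemma lor_deriv: "(f has_vector_derivative f') (at s) \<Longrightarrow> (g has_vector_derivative g') (at s) \<Longrightarrow>
  ((\<lambda>t. lor_inner (f t) (g t)) has_vector_derivative (lor_inner (f s) g' + lor_inner f' (g s))) (at s)"
  by (rule bounded_bilinear.has_vector_derivative[OF bb_lor])

lemma key:
  fixes c q qs cs :: "real \<Rightarrow> real^3"
    and s1 \<kappa> \<theta> :: "real \<Rightarrow> real"
    and R :: real
    and I :: "real set"
  assumes I: "open I"
    and c_diff: "\<forall>s\<in>I. c differentiable (at s)"
    and q_diff: "\<forall>s\<in>I. q differentiable (at s)"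
    and q_unit: "\<forall>s\<in>I. lor_inner (q s) (q s) = 1"
    and h_spacelike: "\<forall>s\<in>I. spacelike (central_normal q s)"
    and striction: "\<forall>s\<in>I. lor_inner (vector_derivative q (at s)) (vector_derivative c (at s)) = 0"
    and arclength: "\<forall>s\<in>I. lnorm (vector_derivative c (at s)) = 1"
    and orient: "\<forall>s\<in>I. lor_inner (vector_derivative c (at s)) (q s) > 0"
    and dev: "developable c q I"
    and frenet_a: "\<forall>s\<in>I. (asymptotic_normal q has_vector_derivative
                     (deriv s1 s * \<kappa> s) *\<^sub>R central_normal q s) (at s)"
    and cs: "\<forall>s. cs s = c s + R *\<^sub>R asymptotic_normal q s"
    and qs_diff: "\<forall>s\<in>I. qs differentiable (at s)"
    and qs_nonnull: "\<forall>s\<in>I. lor_inner (vector_derivative qs (at s)) (vector_derivative qs (at s)) \<noteq> 0"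
    and mannheim: "\<forall>s\<in>I. central_normal qs s = asymptotic_normal q s"
    and angle: "\<forall>s\<in>I. qs s = cos (\<theta> s) *\<^sub>R q s + sin (\<theta> s) *\<^sub>R central_normal q s"
    and as_nonnull: "\<forall>s\<in>I. lor_inner (vector_derivative (asymptotic_normal qs) (at s))
                                      (vector_derivative (asymptotic_normal qs) (at s)) \<noteq> 0"
    and s: "s \<in> I"
  shows "deriv s1 s * \<kappa> s \<noteq> 0 \<and> cos (\<theta> s) \<noteq> 0 \<and>
     distribution_parameter cs (central_normal qs) s = 1/(deriv s1 s * \<kappa> s) \<and>
     distribution_parameter cs (asymptotic_normal qs) s =
       (cos (\<theta> s) + R * deriv s1 s * \<kappa> s * sin (\<theta> s)) / (deriv s1 s * \<kappa> s * cos (\<theta> s))"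
proof -
  define h where "h = central_normal q"
  define a where "a = asymptotic_normal q"
  define k where "k = deriv s1 s * \<kappa> s"
  define Q' where "Q' = vector_derivative q (at s)"
  define L where "L = lnorm Q'"
  have hs: "h s = (1/L) *\<^sub>R Q'" by (simp add: h_def central_normal_def Q'_def L_def)
  have hsp: "lor_inner (h s) (h s) > 0" using h_spacelike s by (simp add: h_def spacelike_def)
  have L0: "L \<noteq> 0"
  proof
    assume "L = 0" then have "h s = 0" using hs by simp
    then show False using hsp by (simp add: lor_inner_def)
  qed
  have Q'h: "Q' = L *\<^sub>R h s" using hs L0 by simp
  have QQ: "lor_inner Q' Q' = L^2 * lor_inner (h s) (h s)"
    unfolding Q'h lor_scale by (simp add: power2_eq_square)
  have L2: "L^2 = \<bar>lor_inner Q' Q'\<bar>" by (simp add: L_def lnorm_def)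
  have QQpos: "lor_inner Q' Q' > 0" using QQ hsp L0 by simp
  have hh: "lor_inner (h s) (h s) = 1" using QQ L2 QQpos L0 by simp
  have qD: "(q has_vector_derivative Q') (at s)"
    using q_diff s vector_derivative_works Q'_def by blast
  have qq: "lor_inner (q s) (q s) = 1" using q_unit s by simp
  have d1: "((\<lambda>t. lor_inner (q t) (q t)) has_vector_derivative (lor_inner (q s) Q' + lor_inner Q' (q s))) (at s)"
    by (rule lor_deriv[OF qD qD])
  have d2: "((\<lambda>t. lor_inner (q t) (q t)) has_vector_derivative 0) (at s)"
    by (rule has_vector_derivative_transform_within_open[OF has_vector_derivative_const I s])
       (use q_unit in simp)
  have "lor_inner (q s) Q' + lor_inner Q' (q s) = 0" using vector_derivative_unique_at[OF d1 d2] .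
  then have qQ: "lor_inner (q s) Q' = 0" by (simp add: lor_sym[of Q'])
  have qh: "lor_inner (q s) (h s) = 0" using qQ L0 unfolding Q'h lor_scale by simp
  have "a s = (1/L) *\<^sub>R lcross Q' (q s)" by (simp add: a_def asymptotic_normal_def Q'_def L_def)
  then have as_: "a s = lcross (h s) (q s)"
    by (simp add: Q'h lcross_scale L0)
  define C where "C = vector_derivative c (at s)"
  have "distribution_parameter c q s = 0" using dev s by (simp add: developable_def)
  then have "det3 C (q s) Q' = 0" using QQpos
    by (simp add: distribution_parameter_def C_def Q'_def[symmetric])
  then have dC: "det3 C (q s) (h s) = 0" unfolding Q'h det3_scale3 using L0 by simp
  have "lor_inner Q' C = 0" using striction s by (simp add: C_def Q'_def)
  then have hC: "lor_inner (h s) C = 0" unfolding Q'h lor_scale using L0 by simp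
  define x where "x = lor_inner C (q s)"
  have Cx: "C = x *\<^sub>R q s" using decomp[OF qq hh qh dC hC] x_def by simp
  have xpos: "x > 0" using orient s by (simp add: x_def C_def)
  have "lnorm C = 1" using arclength s by (simp add: C_def)
  then have "\<bar>x\<bar> = 1" unfolding Cx lnorm_def lor_scale qq by (simp add: abs_mult)
  then have "x = 1" using xpos by simp
  then have Cq: "C = q s" using Cx by simp
  have cD: "(c has_vector_derivative C) (at s)"
    using c_diff s vector_derivative_works C_def by blast
  have aD: "\<And>t. t \<in> I \<Longrightarrow> (a has_vector_derivative (deriv s1 t * \<kappa> t) *\<^sub>R h t) (at t)"
    using frenet_a by (simp add: a_def h_def)
  have csf: "cs = (\<lambda>t. c t + R *\<^sub>R a t)" using cs by (simp add: a_def fun_eq_iff)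
  have "(cs has_vector_derivative C + R *\<^sub>R (k *\<^sub>R h s)) (at s)"
    unfolding csf k_def
    using has_vector_derivative_add[OF cD has_vector_derivative_scaleR[OF DERIV_const aD[OF s]]]
    by simp
  then have csV: "vector_derivative cs (at s) = q s + (R * k) *\<^sub>R h s"
    using vector_derivative_at Cq by fastforce
  have "(central_normal qs has_vector_derivative k *\<^sub>R h s) (at s)"
    unfolding k_def by (rule has_vector_derivative_transform_within_open[OF aD[OF s] I s])
       (use mannheim in \<open>simp add: a_def k_def\<close>)
  then have hsV: "vector_derivative (central_normal qs) (at s) = k *\<^sub>R h s"
    using vector_derivative_at by blast
  have asq: "asymptotic_normal qs t = lcross (a t) (qs t)"
    and qsV: "vector_derivative qs (at t) = lnorm (vector_derivative qs (at t)) *\<^sub>R a t"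
    if t: "t \<in> I" for t
  proof -
    define P where "P = vector_derivative qs (at t)"
    define M where "M = lnorm P"
    have "M \<noteq> 0" using qs_nonnull t by (simp add: M_def P_def lnorm_def)
    moreover have "(1/M) *\<^sub>R P = a t" using mannheim t
      by (simp add: central_normal_def a_def M_def P_def)
    ultimately have PM: "P = M *\<^sub>R a t" by (metis scaleR_one nonzero_divide_eq_eq scaleR_scaleR divide_inverse mult_1 inverse_eq_divide right_inverse)
    show "vector_derivative qs (at t) = lnorm (vector_derivative qs (at t)) *\<^sub>R a t"
      using PM[unfolded M_def, unfolded P_def] .
    have "asymptotic_normal qs t = (1/M) *\<^sub>R lcross P (qs t)"
      by (simp add: asymptotic_normal_def P_def M_def)
    then show "asymptotic_normal qs t = lcross (a t) (qs t)"
      using \<open>M \<noteq> 0\<close> by (simp add: PM lcross_scale)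
  qed
  have qsD: "(qs has_vector_derivative vector_derivative qs (at s)) (at s)"
    using qs_diff s vector_derivative_works by blast
  have qss: "qs s = cos (\<theta> s) *\<^sub>R q s + sin (\<theta> s) *\<^sub>R h s" using angle s by (simp add: h_def)
  have "((\<lambda>t. lcross (a t) (qs t)) has_vector_derivative
      (lcross (a s) (vector_derivative qs (at s)) + lcross (k *\<^sub>R h s) (qs s))) (at s)"
    using lcross_deriv[OF aD[OF s] qsD] by (simp add: k_def)
  also have "lcross (a s) (vector_derivative qs (at s)) + lcross (k *\<^sub>R h s) (qs s)
     = (k * cos (\<theta> s)) *\<^sub>R a s"
  proof -
    obtain M where M: "vector_derivative qs (at s) = M *\<^sub>R a s" using qsV[OF s] by blast
    show ?thesis unfolding M qss lcross_scale lcross_self lcross_hqs as_ by simp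
  qed
  finally have "(asymptotic_normal qs has_vector_derivative (k * cos (\<theta> s)) *\<^sub>R a s) (at s)"
    by (rule has_vector_derivative_transform_within_open[OF _ I s]) (simp add: asq)
  then have asV: "vector_derivative (asymptotic_normal qs) (at s) = (k * cos (\<theta> s)) *\<^sub>R a s"
    using vector_derivative_at by blast
  have hq: "lor_inner (h s) (q s) = 0" using qh lor_sym by metis
  have aa: "lor_inner (a s) (a s) = -1"
    unfolding as_ cross_norm hq hh qq by simp
  have "lor_inner (vector_derivative (asymptotic_normal qs) (at s))
          (vector_derivative (asymptotic_normal qs) (at s)) \<noteq> 0" using as_nonnull s by blast
  then have "(k * cos (\<theta> s)) * ((k * cos (\<theta> s)) * -1) \<noteq> 0" unfolding asV lor_scale aa .
  then have kc: "k * cos (\<theta> s) \<noteq> 0" by simp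
  have as2: "asymptotic_normal qs s = lcross (lcross (h s) (q s)) (cos (\<theta> s) *\<^sub>R q s + sin (\<theta> s) *\<^sub>R h s)"
    using asq[OF s] qss as_ by simp
  have DP1: "distribution_parameter cs (central_normal qs) s = k / (k * k)"
  proof -
    have cn: "central_normal qs s = lcross (h s) (q s)" using mannheim s as_ by (simp add: a_def)
    show ?thesis
      unfolding distribution_parameter_def csV hsV lor_scale hh cn P1[OF qq hh qh] by simp
  qed
  have DP2: "distribution_parameter cs (asymptotic_normal qs) s =
     (- (k * cos (\<theta> s)) * (cos (\<theta> s) + R * k * sin (\<theta> s))) / ((k * cos (\<theta> s)) * (k * cos (\<theta> s)) * -1)"
    unfolding distribution_parameter_def csV asV lor_scale aa as2
    unfolding as_ P2[OF qq hh qh] by simp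
  have k0: "k \<noteq> 0" and c0: "cos (\<theta> s) \<noteq> 0" using kc by auto
  have e1: "k / (k * k) = 1 / k" using k0 by simp
  have e2: "(- (k * cos (\<theta> s)) * (cos (\<theta> s) + R * k * sin (\<theta> s))) / ((k * cos (\<theta> s)) * (k * cos (\<theta> s)) * -1)
     = (cos (\<theta> s) + R * k * sin (\<theta> s)) / (k * cos (\<theta> s))"
    using kc by (simp add: divide_simps)
  show ?thesis using k0 c0 DP1 DP2 e1 e2 unfolding k_def by (simp add: mult.assoc)
qed
theorem corollary6p4:
  fixes c q qs cs :: "real \<Rightarrow> real^3"
    and s1 \<kappa> \<theta> :: "real \<Rightarrow> real"
    and R :: real
    and I :: "real set"
  assumes I: "open I" "I \<noteq> {}"
    \<comment> \<open>the ruled surface phi = c + v q, of type M^1_+\<close>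
    and c_diff: "\<forall>s\<in>I. c differentiable (at s)"
    and q_diff: "\<forall>s\<in>I. q differentiable (at s)"
    and q_unit: "\<forall>s\<in>I. lor_inner (q s) (q s) = 1"
    and h_spacelike: "\<forall>s\<in>I. spacelike (central_normal q s)"
    and striction: "\<forall>s\<in>I. lor_inner (vector_derivative q (at s)) (vector_derivative c (at s)) = 0"
    and arclength: "\<forall>s\<in>I. lnorm (vector_derivative c (at s)) = 1"
    and orient: "\<forall>s\<in>I. lor_inner (vector_derivative c (at s)) (q s) > 0"
    and dev: "developable c q I"
    \<comment> \<open>arc length s1 of the spherical image of q, conical curvature kappa, Frenet formulas\<close>
    and s1: "\<forall>s\<in>I. (s1 has_real_derivative lnorm (vector_derivative q (at s))) (at s)"
    and frenet_h: "\<forall>s\<in>I. (central_normal q has_vector_derivative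
                     deriv s1 s *\<^sub>R (\<kappa> s *\<^sub>R asymptotic_normal q s - q s)) (at s)"
    and frenet_a: "\<forall>s\<in>I. (asymptotic_normal q has_vector_derivative
                     (deriv s1 s * \<kappa> s) *\<^sub>R central_normal q s) (at s)"
    \<comment> \<open>the Mannheim offset phi* = c + R a + v q*, of type M^2_+\<close>
    and cs: "\<forall>s. cs s = c s + R *\<^sub>R asymptotic_normal q s"
    and qs_diff: "\<forall>s\<in>I. qs differentiable (at s)"
    and qs_unit: "\<forall>s\<in>I. lor_inner (qs s) (qs s) = 1"
    and qs_nonnull: "\<forall>s\<in>I. lor_inner (vector_derivative qs (at s)) (vector_derivative qs (at s)) \<noteq> 0"
    and hs_timelike: "\<forall>s\<in>I. timelike (central_normal qs s)"
    and mannheim: "\<forall>s\<in>I. central_normal qs s = asymptotic_normal q s"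
    and angle: "\<forall>s\<in>I. qs s = cos (\<theta> s) *\<^sub>R q s + sin (\<theta> s) *\<^sub>R central_normal q s"
    \<comment> \<open>phi_{a*} is a ruled surface: its director derivative is non-null\<close>
    and as_nonnull: "\<forall>s\<in>I. lor_inner (vector_derivative (asymptotic_normal qs) (at s))
                                      (vector_derivative (asymptotic_normal qs) (at s)) \<noteq> 0"
  shows "\<not> developable cs (central_normal qs) I \<and>
         (developable cs (asymptotic_normal qs) I \<longleftrightarrow>
            (\<forall>s\<in>I. cos (\<theta> s) + R * deriv s1 s * \<kappa> s * sin (\<theta> s) = 0))"
  proof -
  have K: "\<And>s. s \<in> I \<Longrightarrow> deriv s1 s * \<kappa> s \<noteq> 0 \<and> cos (\<theta> s) \<noteq> 0 \<and>
     distribution_parameter cs (central_normal qs) s = 1/(deriv s1 s * \<kappa> s) \<and>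
     distribution_parameter cs (asymptotic_normal qs) s =
       (cos (\<theta> s) + R * deriv s1 s * \<kappa> s * sin (\<theta> s)) / (deriv s1 s * \<kappa> s * cos (\<theta> s))"
    using key[OF I(1) c_diff q_diff q_unit h_spacelike striction arclength orient dev frenet_a cs
        qs_diff qs_nonnull mannheim angle as_nonnull] by blast
  obtain s0 where s0: "s0 \<in> I" using I(2) by blast
  have A: "\<not> developable cs (central_normal qs) I"
  proof -
    have "distribution_parameter cs (central_normal qs) s0 \<noteq> 0" using K[OF s0] by simp
    then show ?thesis using s0 unfolding developable_def by blast
  qed
  have B: "developable cs (asymptotic_normal qs) I \<longleftrightarrow>
            (\<forall>s\<in>I. cos (\<theta> s) + R * deriv s1 s * \<kappa> s * sin (\<theta> s) = 0)"
    unfolding developable_def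
  proof (rule ball_cong[OF refl])
    fix s assume s: "s \<in> I"
    show "(distribution_parameter cs (asymptotic_normal qs) s = 0) =
      (cos (\<theta> s) + R * deriv s1 s * \<kappa> s * sin (\<theta> s) = 0)" using K[OF s] by simp
  qed
  show ?thesis using A B by blast
qed

end
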